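(* Let $\mathbf{h}\in\mathbb{C}^{n}$ be a fixed (deterministic) vector and let $\bar{\mathbf{A}}\in\mathbb{C}^{m\times n}$ be a random matrix whose elements are i.i.d. with zero mean and unit variance. Let $\mathbf{v}\sim\mathcal{CN}(\mathbf{0}_{m},\mathbf{I}_{m})$ be independent of $\bar{\mathbf{A}}$, let $\mathbf{y}=\bar{\mathbf{A}}\mathbf{h}+\mathbf{v}$ and $\hat{\mathbf{y}}=\mathrm{Q}(\mathbf{y})$, where $\mathrm{Q}$ is the $B$-bit quantizer described in the context. Let $\mathcal{CV}\subseteq\{1,\dots,m\}$ be an index set, $\mathcal{CV}_{\mathrm{R}}=\mathcal{CV}\cup(\mathcal{CV}+m)\subseteq\{1,\dots,2m\}$, and for $\hat{\mathbf{h}}\in\mathbb{C}^{n}$ define the CV function $$\ell_{\mathcal{CV}}(\hat{\mathbf{h}})=\sum_{i\in\mathcal{CV}_{\mathrm{R}}}\log\left(\Phi\left(\frac{\hat{y}_{\mathrm{R},i}^{\mathrm{up}}-\bar{\mathbf{a}}_{\mathrm{R},i}^{\mathrm{T}}\hat{\mathbf{h}}_{\mathrm{R}}}{\sqrt{1/2}}\right)-\Phi\left(\frac{\hat{y}_{\mathrm{R},i}^{\mathrm{lo}}-\bar{\mathbf{a}}_{\mathrm{R},i}^{\mathrm{T}}\hat{\mathbf{h}}_{\mathrm{R}}}{\sqrt{1/2}}\right)\right).$$ Define $f_{\mathcal{CV}}(\hat{\mathbf{h}})$ as the limit of $\frac{1}{2|\mathcal{CV}|}\ell_{\mathcal{CV}}(\hat{\mathbf{h}})$,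 i.e. $\frac{1}{2|\mathcal{CV}|}\ell_{\mathcal{CV}}(\hat{\mathbf{h}})\to f_{\mathcal{CV}}(\hat{\mathbf{h}})$ in probability as $|\mathcal{CV}|\to\infty$. Then $f_{\mathcal{CV}}(\hat{\mathbf{h}})$ is a concave function of $\hat{\mathbf{h}}$, whose maximum is attained at $\hat{\mathbf{h}}=\mathbf{h}$.
   Context: $\Phi$ is the CDF of the standard normal $\mathcal{N}(0,1)$. Real forms: for a complex vector $\mathbf{x}$, $\mathbf{x}_{\mathrm{R}}=[\mathrm{Re}(\mathbf{x})^{\mathrm{T}},\mathrm{Im}(\mathbf{x})^{\mathrm{T}}]^{\mathrm{T}}$; for a complex matrix $\mathbf{X}$, $\mathbf{X}_{\mathrm{R}}=\begin{bmatrix}\mathrm{Re}(\mathbf{X})&-\mathrm{Im}(\mathbf{X})\\\mathrm{Im}(\mathbf{X})&\mathrm{Re}(\mathbf{X})\end{bmatrix}$. $\bar{\mathbf{a}}_{\mathrm{R},i}$ denotes the transpose of the $i$-th row of $\bar{\mathbf{A}}_{\mathrm{R}}$, and $\hat{y}_{\mathrm{R},i}$ is the $i$-th entry of $\hat{\mathbf{y}}_{\mathrm{R}}$. The $B$-bit quantizer $\mathrm{Q}$ acts elementwise and separately on real and imaginary parts: the real line is partitioned into $2^{B}$ intervals $[t_{j},t_{j+1})$ (with $t_0=-\infty$, $t_{2^B}=+\infty$), each with a quantization point; $\mathrm{Q}$ maps a real number in an interval to that interval's point. For each real entry, $\hat{y}_{\mathrm{R},i}^{\mathrm{lo}}$ and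 $\hat{y}_{\mathrm{R},i}^{\mathrm{up}}$ are the lower and upper thresholds of the interval containing $y_{\mathrm{R},i}$ (equivalently, associated with the quantized value $\hat{y}_{\mathrm{R},i}$). The noise $\mathbf{v}\sim\mathcal{CN}(\mathbf{0},\mathbf{I})$ means each real/imaginary component has variance $1/2$. Logarithms are natural. *)

theory Defs
  imports "HOL-Probability.Probability"
begin

definition Phi :: "real \<Rightarrow> real" where
  "Phi x = measure (density lborel std_normal_density) {..x}"

definition Phi_ext :: "ereal \<Rightarrow> real" where
  "Phi_ext e = (if e = \<infinity> then 1 else if e = -\<infinity> then 0 else Phi (real_of_ereal e))"

(* Real form of a complex vector: x_R = [Re x; Im x], indexed by 'n + 'n
   (Inl j = j-th real part, Inr j = j-th imaginary part). *)
definition vecR :: "complex ^ 'n \<Rightarrow> real ^ ('n + 'n)" where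
  "vecR x = (\<chi> k. case k of Inl j \<Rightarrow> Re (x $ j) | Inr j \<Rightarrow> Im (x $ j))"

(* Rows of the real form A_R = [Re A, -Im A; Im A, Re A] of a complex matrix A
   whose i-th row is  A i.  Real-form row index: Inl i = row i (top block),
   Inr i = row i + m (bottom block). *)
definition rowR :: "(nat \<Rightarrow> complex ^ 'n) \<Rightarrow> nat + nat \<Rightarrow> real ^ ('n + 'n)" where
  "rowR A k = (case k of
      Inl i \<Rightarrow> (\<chi> c. case c of Inl j \<Rightarrow> Re (A i $ j) | Inr j \<Rightarrow> - Im (A i $ j))
    | Inr i \<Rightarrow> (\<chi> c. case c of Inl j \<Rightarrow> Im (A i $ j) | Inr j \<Rightarrow> Re (A i $ j)))"

definition seqR :: "(nat \<Rightarrow> complex) \<Rightarrow> nat + nat \<Rightarrow> real" where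
  "seqR v k = (case k of Inl i \<Rightarrow> Re (v i) | Inr i \<Rightarrow> Im (v i))"

definition thresholds :: "nat \<Rightarrow> (nat \<Rightarrow> ereal) \<Rightarrow> bool" where
  "thresholds B t \<longleftrightarrow> t 0 = -\<infinity> \<and> t (2^B) = \<infinity> \<and>
     (\<forall>j. 0 < j \<and> j < 2^B \<longrightarrow> \<bar>t j\<bar> \<noteq> \<infinity>) \<and>
     (\<forall>j. j < 2^B \<longrightarrow> t j < t (Suc j))"

definition qidx :: "nat \<Rightarrow> (nat \<Rightarrow> ereal) \<Rightarrow> real \<Rightarrow> nat" where
  "qidx B t y = (THE j. j < 2^B \<and> t j \<le> ereal y \<and> ereal y < t (Suc j))"

definition q_lo :: "nat \<Rightarrow> (nat \<Rightarrow> ereal) \<Rightarrow> real \<Rightarrow> ereal" where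
  "q_lo B t y = t (qidx B t y)"

definition q_up :: "nat \<Rightarrow> (nat \<Rightarrow> ereal) \<Rightarrow> real \<Rightarrow> ereal" where
  "q_up B t y = t (Suc (qidx B t y))"

definition ell_CV :: "nat \<Rightarrow> (nat \<Rightarrow> ereal) \<Rightarrow> nat set \<Rightarrow> (nat \<Rightarrow> complex ^ 'n)
     \<Rightarrow> (nat \<Rightarrow> complex) \<Rightarrow> complex ^ 'n \<Rightarrow> complex ^ 'n \<Rightarrow> real" where
  "ell_CV B t CV A v h hh =
     (\<Sum>k \<in> Inl ` CV \<union> Inr ` CV.
        let yR = rowR A k \<bullet> vecR h + seqR v k;
            z = rowR A k \<bullet> vecR hh
        in ln (Phi_ext ((q_up B t yR - ereal z) / ereal (sqrt (1/2)))
             - Phi_ext ((q_lo B t yR - ereal z) / ereal (sqrt (1/2)))))"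

definition conv_in_prob :: "'a measure \<Rightarrow> (nat \<Rightarrow> 'a \<Rightarrow> real) \<Rightarrow> real \<Rightarrow> bool" where
  "conv_in_prob M X c \<longleftrightarrow>
     (\<forall>e>0. (\<lambda>k. measure M {\<omega> \<in> space M. \<bar>X k \<omega> - c\<bar> > e}) \<longlonglongrightarrow> 0)"

end

theory Submission
  imports Defs "HOL-Real_Asymp.Real_Asymp"
begin

abbreviation "phi \<equiv> std_normal_density"
abbreviation "Dn \<equiv> density lborel std_normal_density"

lemma real_distribution_Dn: "real_distribution Dn"
  unfolding real_distribution_def real_distribution_axioms_def
  using prob_space_normal_density by auto

lemma Phi_cdf: "Phi = cdf Dn"
  by (simp add: Phi_def cdf_def fun_eq_iff)

lemma measure_Dn: assumes "S \<in> sets borel" shows "measure Dn S = (LBINT x:S. phi x)"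
proof -
  have int: "integrable lborel (\<lambda>x. indicator S x * phi x)"
    using integrable_mult_indicator[of S lborel phi] assms by simp
  have "emeasure Dn S = (\<integral>\<^sup>+x. ennreal (indicator S x * phi x) \<partial>lborel)"
    using assms by (subst emeasure_density) (auto intro!: nn_integral_cong simp: indicator_def)
  also have "\<dots> = ennreal (LBINT x:S. phi x)"
    using int by (subst nn_integral_eq_integral) (auto simp: set_lebesgue_integral_def)
  finally show ?thesis
    by (simp add: measure_def set_lebesgue_integral_def integral_nonneg_AE)
qed

lemma Phi_diff: assumes "a < b" shows "Phi b - Phi a = (LBINT x=a..b. phi x)"
proof -
  interpret real_distribution Dn by (rule real_distribution_Dn)
  have "Phi b - Phi a = measure Dn {a<..b}" using cdf_diff_eq[OF assms] by (simp add: Phi_cdf)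
  also have "\<dots> = (LBINT x:{a<..b}. phi x)"
    by (rule measure_Dn) auto
  also have "\<dots> = (LBINT x=a..b. phi x)" using assms by (simp add: interval_integral_Ioc)
  finally show ?thesis .
qed

lemma isCont_phi: "isCont phi x"
  unfolding std_normal_density_def by (auto intro!: continuous_intros)

lemma continuous_on_phi: "continuous_on S phi"
  by (intro continuous_at_imp_continuous_on ballI isCont_phi)

lemma DERIV_Phi: "(Phi has_real_derivative phi x) (at x)"
proof -
  obtain F where F: "\<And>x::real. (F has_vector_derivative phi x) (at x)"
    using einterval_antiderivative[of "-\<infinity>" "\<infinity>" phi] isCont_phi by auto
  have diff: "Phi b - Phi a = F b - F a" if "a < b" for a b
  proof -
    have "Phi b - Phi a = (LBINT x=a..b. phi x)" by (rule Phi_diff[OF that])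
    also have "\<dots> = F b - F a"
      by (rule interval_integral_FTC_finite[OF continuous_on_phi])
         (auto intro: has_vector_derivative_at_within F)
    finally show ?thesis .
  qed
  define C where "C = Phi 0 - F 0"
  have eq: "Phi y = F y + C" for y
  proof -
    consider "y < 0" | "y = 0" | "y > 0" by linarith
    then show ?thesis
      by cases (use diff[of y 0] diff[of 0 y] in \<open>auto simp: C_def\<close>)
  qed
  have e: "Phi = (\<lambda>y. F y + C)" by (rule ext) (rule eq)
  have "((\<lambda>y. F y + C) has_real_derivative phi x) (at x)"
  proof -
    have "(F has_real_derivative phi x) (at x)"
      using F[of x] by (simp add: has_real_derivative_iff_has_vector_derivative)
    from DERIV_add[OF this DERIV_const[of C]] show ?thesis by simp
  qed
  then show ?thesis by (subst e)
qed

lemma DERIV_phi: "(phi has_real_derivative (- x * phi x)) (at x)"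
proof -
  have h: "sqrt (2*pi) * sqrt (2*pi) = 2*pi" by simp
  have h2: "sqrt (2*pi) / (2*pi) = 1 / sqrt (2*pi)"
    using h by (simp add: field_simps)
  show ?thesis
  unfolding std_normal_density_def
  apply (auto intro!: derivative_eq_intros simp: power2_eq_square)
  using h by (simp add: field_simps)
qed

lemma Phi_lim_bot: "(Phi \<longlongrightarrow> 0) at_bot"
proof -
  interpret real_distribution Dn by (rule real_distribution_Dn)
  show ?thesis using cdf_lim_at_bot by (simp add: Phi_cdf)
qed

lemma Phi_lim_top: "(Phi \<longlongrightarrow> 1) at_top"
proof -
  interpret real_distribution Dn by (rule real_distribution_Dn)
  show ?thesis using cdf_lim_at_top_prob by (simp add: Phi_cdf)
qed

lemma phi_lim_top: "(phi \<longlongrightarrow> 0) at_top"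
  unfolding std_normal_density_def by real_asymp

lemma phi_lim_bot: "(phi \<longlongrightarrow> 0) at_bot"
  unfolding std_normal_density_def by real_asymp

lemma phi_pos: "0 < phi x"
  by (simp add: normal_density_pos)

lemma Phi_strict_mono: "x < y \<Longrightarrow> Phi x < Phi y"
  by (rule DERIV_pos_imp_increasing[of x y Phi]) (auto intro: DERIV_Phi phi_pos)

lemma Phi_mono: "x \<le> y \<Longrightarrow> Phi x \<le> Phi y"
  using Phi_strict_mono[of x y] by (cases "x = y") auto

lemma Phi_nonneg: "0 \<le> Phi x"
  by (simp add: Phi_def)

lemma Phi_le1: "Phi x \<le> 1"
proof -
  interpret real_distribution Dn by (rule real_distribution_Dn)
  show ?thesis using cdf_bounded_prob by (simp add: Phi_cdf)
qed

lemma Phi_pos: "0 < Phi x"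
  using Phi_strict_mono[of "x-1" x] Phi_nonneg[of "x-1"] by simp

lemma Phi_less1: "Phi x < 1"
  using Phi_strict_mono[of x "x+1"] Phi_le1[of "x+1"] by simp

lemma DERIV_Phi_chain[derivative_intros]:
  "(g has_real_derivative g') (at x within S) \<Longrightarrow> D = phi (g x) * g' \<Longrightarrow>
   ((\<lambda>x. Phi (g x)) has_real_derivative D) (at x within S)"
  using DERIV_chain2[OF DERIV_Phi] by blast

lemma DERIV_phi_chain[derivative_intros]:
  "(g has_real_derivative g') (at x within S) \<Longrightarrow> D = - g x * phi (g x) * g' \<Longrightarrow>
   ((\<lambda>x. phi (g x)) has_real_derivative D) (at x within S)"
  using DERIV_chain2[OF DERIV_phi] by (simp add: mult.assoc)

lemma K1: assumes "x \<le> y" shows "0 \<le> y * (Phi y - Phi x) - phi x + phi y"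
proof -
  let ?k = "\<lambda>u. u * (Phi u - Phi x) - phi x + phi u"
  have "?k x \<le> ?k y"
  proof (rule DERIV_nonneg_imp_nondecreasing[OF assms])
    fix u assume "x \<le> u" "u \<le> y"
    have "DERIV ?k u :> Phi u - Phi x"
      by (auto intro!: derivative_eq_intros simp: algebra_simps)
    then show "\<exists>d. DERIV ?k u :> d \<and> 0 \<le> d" using Phi_mono[OF \<open>x \<le> u\<close>] by auto
  qed
  then show ?thesis by simp
qed

lemma K2: assumes "x \<le> y" shows "0 \<le> phi x - phi y - x * (Phi y - Phi x)"
proof -
  let ?k = "\<lambda>u. phi u - phi y - u * (Phi y - Phi u)"
  have "?k y \<le> ?k x"
  proof (rule DERIV_nonpos_imp_nonincreasing[OF assms])
    fix u assume "x \<le> u" "u \<le> y"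
    have "DERIV ?k u :> - (Phi y - Phi u)"
      by (auto intro!: derivative_eq_intros simp: algebra_simps)
    then show "\<exists>d. DERIV ?k u :> d \<and> d \<le> 0" using Phi_mono[OF \<open>u \<le> y\<close>] by auto
  qed
  then show ?thesis by simp
qed

lemma K1inf: "0 \<le> y * Phi y + phi y"
proof -
  have "((\<lambda>x. y * (Phi y - Phi x) - phi x + phi y) \<longlongrightarrow> y * (Phi y - 0) - 0 + phi y) at_bot"
    by (intro tendsto_intros Phi_lim_bot phi_lim_bot)
  then have L: "((\<lambda>x. y * (Phi y - Phi x) - phi x + phi y) \<longlongrightarrow> y * Phi y + phi y) at_bot" by simp
  have E: "\<forall>\<^sub>F x in at_bot. 0 \<le> y * (Phi y - Phi x) - phi x + phi y"
    using eventually_le_at_bot[of y] by eventually_elim (rule K1)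
  show ?thesis using tendsto_lowerbound[OF L E] by simp
qed

lemma K2inf: "0 \<le> phi x - x * (1 - Phi x)"
proof -
  have "((\<lambda>y. phi x - phi y - x * (Phi y - Phi x)) \<longlongrightarrow> phi x - 0 - x * (1 - Phi x)) at_top"
    by (intro tendsto_intros Phi_lim_top phi_lim_top)
  then have L: "((\<lambda>y. phi x - phi y - x * (Phi y - Phi x)) \<longlongrightarrow> phi x - x * (1 - Phi x)) at_top" by simp
  have E: "\<forall>\<^sub>F y in at_top. 0 \<le> phi x - phi y - x * (Phi y - Phi x)"
    using eventually_ge_at_top[of x] by eventually_elim (rule K2)
  show ?thesis using tendsto_lowerbound[OF L E] by simp
qed

lemma concave_ln_gen:
  fixes G N N' :: "real \<Rightarrow> real"
  assumes dG: "\<And>w. (G has_real_derivative N w) (at w)"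
    and dN: "\<And>w. (N has_real_derivative N' w) (at w)"
    and pos: "\<And>w. 0 < G w"
    and ineq: "\<And>w. N' w * G w \<le> N w * N w"
  shows "concave_on UNIV (\<lambda>w. ln (G w))"
proof (rule f''_le0_imp_concave[where f'="\<lambda>w. N w / G w" and f''="\<lambda>w. (N' w * G w - N w * N w) / (G w)\<^sup>2"])
  fix w :: real
  show "DERIV (\<lambda>w. ln (G w)) w :> N w / G w"
    using pos[of w] by (auto intro!: derivative_eq_intros dG simp: field_simps)
  show "DERIV (\<lambda>w. N w / G w) w :> (N' w * G w - N w * N w) / (G w)\<^sup>2"
    using pos[of w] by (auto intro!: derivative_eq_intros dG dN simp: field_simps power2_eq_square)
  show "(N' w * G w - N w * N w) / (G w)\<^sup>2 \<le> 0"
    using ineq[of w] by (intro divide_nonpos_nonneg) auto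
qed auto

lemma LC_lower: "concave_on UNIV (\<lambda>w. ln (Phi (b - w)))"
proof (rule concave_ln_gen[where N="\<lambda>w. - phi (b - w)" and N'="\<lambda>w. - ((b - w) * phi (b - w))"])
  fix w
  show "((\<lambda>w. Phi (b - w)) has_real_derivative - phi (b - w)) (at w)"
    by (auto intro!: derivative_eq_intros simp: algebra_simps)
  show "((\<lambda>w. - phi (b - w)) has_real_derivative - ((b - w) * phi (b - w))) (at w)"
    by (auto intro!: derivative_eq_intros simp: algebra_simps)
  show "0 < Phi (b - w)" by (rule Phi_pos)
  have "0 \<le> phi (b - w) * ((b - w) * Phi (b - w) + phi (b - w))"
    using K1inf[of "b - w"] phi_pos[of "b - w"] by simp
  then show "- ((b - w) * phi (b - w)) * Phi (b - w) \<le> - phi (b - w) * - phi (b - w)"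
    by (simp add: algebra_simps)
qed

lemma LC_upper: "concave_on UNIV (\<lambda>w. ln (1 - Phi (a - w)))"
proof (rule concave_ln_gen[where N="\<lambda>w. phi (a - w)" and N'="\<lambda>w. (a - w) * phi (a - w)"])
  fix w
  show "((\<lambda>w. 1 - Phi (a - w)) has_real_derivative phi (a - w)) (at w)"
    by (auto intro!: derivative_eq_intros simp: algebra_simps)
  show "((\<lambda>w. phi (a - w)) has_real_derivative (a - w) * phi (a - w)) (at w)"
    by (auto intro!: derivative_eq_intros simp: algebra_simps)
  show "0 < 1 - Phi (a - w)" using Phi_less1[of "a - w"] by simp
  have "0 \<le> phi (a - w) * (phi (a - w) - (a - w) * (1 - Phi (a - w)))"
    using K2inf[of "a - w"] phi_pos[of "a - w"] by simp
  then show "(a - w) * phi (a - w) * (1 - Phi (a - w)) \<le> phi (a - w) * phi (a - w)"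
    by (simp add: algebra_simps)
qed

lemma LC_both: assumes "a < b" shows "concave_on UNIV (\<lambda>w. ln (Phi (b - w) - Phi (a - w)))"
proof (rule concave_ln_gen[where N="\<lambda>w. phi (a - w) - phi (b - w)"
      and N'="\<lambda>w. (a - w) * phi (a - w) - (b - w) * phi (b - w)"])
  fix w
  show "((\<lambda>w. Phi (b - w) - Phi (a - w)) has_real_derivative phi (a - w) - phi (b - w)) (at w)"
    by (auto intro!: derivative_eq_intros simp: algebra_simps)
  show "((\<lambda>w. phi (a - w) - phi (b - w)) has_real_derivative (a - w) * phi (a - w) - (b - w) * phi (b - w)) (at w)"
    by (auto intro!: derivative_eq_intros simp: algebra_simps)
  show "0 < Phi (b - w) - Phi (a - w)" using Phi_strict_mono[of "a - w" "b - w"] assms by simp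
  define x where "x = a - w"
  define y where "y = b - w"
  have xy: "x \<le> y" using assms by (simp add: x_def y_def)
  have "0 \<le> phi x * (phi x - phi y - x * (Phi y - Phi x))"
    using K2[OF xy] phi_pos[of x] by simp
  moreover have "0 \<le> phi y * (y * (Phi y - Phi x) - phi x + phi y)"
    using K1[OF xy] phi_pos[of y] by simp
  ultimately have "(x * phi x - y * phi y) * (Phi y - Phi x) \<le> (phi x - phi y) * (phi x - phi y)"
    by (simp add: algebra_simps)
  then show "((a - w) * phi (a - w) - (b - w) * phi (b - w)) * (Phi (b - w) - Phi (a - w))
     \<le> (phi (a - w) - phi (b - w)) * (phi (a - w) - phi (b - w))"
    by (simp add: x_def y_def)
qed

lemma LC: fixes \<alpha> \<beta> :: ereal assumes "\<alpha> < \<beta>"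
  shows "concave_on UNIV (\<lambda>w. ln (Phi_ext (\<beta> - ereal w) - Phi_ext (\<alpha> - ereal w)))"
proof (cases \<alpha>)
  case (real a)
  show ?thesis
  proof (cases \<beta>)
    case (real b)
    then show ?thesis using LC_both[of a b] assms \<open>\<alpha> = ereal a\<close> by (simp add: Phi_ext_def)
  next
    case PInf
    then show ?thesis using LC_upper[of a] \<open>\<alpha> = ereal a\<close> by (simp add: Phi_ext_def)
  next
    case MInf
    then show ?thesis using assms by simp
  qed
next
  case PInf
  then show ?thesis using assms by simp
next
  case MInf
  show ?thesis
  proof (cases \<beta>)
    case (real b)
    then show ?thesis using LC_lower[of b] \<open>\<alpha> = -\<infinity>\<close> by (simp add: Phi_ext_def)
  next
    case PInf
    then show ?thesis using \<open>\<alpha> = -\<infinity>\<close> by (simp add: Phi_ext_def concave_on_const)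
  next
    case MInf
    then show ?thesis using assms by simp
  qed
qed

abbreviation "cc \<equiv> sqrt (1/2::real)"

definition Pq :: "(nat \<Rightarrow> ereal) \<Rightarrow> nat \<Rightarrow> real \<Rightarrow> real" where
  "Pq t j z = Phi_ext ((t (Suc j) - ereal z) / ereal cc) - Phi_ext ((t j - ereal z) / ereal cc)"

definition Iq :: "(nat \<Rightarrow> ereal) \<Rightarrow> nat \<Rightarrow> real set" where
  "Iq t j = {y. t j \<le> ereal y \<and> ereal y < t (Suc j)}"

lemma cc_pos: "0 < cc" by simp

lemma Phi_ext_simps[simp]: "Phi_ext (ereal x) = Phi x" "Phi_ext \<infinity> = 1" "Phi_ext (-\<infinity>) = 0"
  by (auto simp: Phi_ext_def)

lemma PhiE_formula:
  "Phi_ext ((e - ereal z) / ereal cc) =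
     (if e = \<infinity> then 1 else if e = -\<infinity> then 0 else Phi ((real_of_ereal e - z) / cc))"
  by (cases e) (auto simp: Phi_ext_def)

lemma thr_mono_aux:
  assumes "thresholds B t" shows "j < k \<Longrightarrow> k \<le> 2^B \<Longrightarrow> t j < t k"
proof (induction k)
  case 0 then show ?case by simp
next
  case (Suc k)
  have s: "t k < t (Suc k)" using Suc.prems assms by (auto simp: thresholds_def)
  show ?case
  proof (cases "j = k")
    case True then show ?thesis using s by simp
  next
    case False
    then have "t j < t k" using Suc by auto
    then show ?thesis using s by simp
  qed
qed

lemma thr_mono: "thresholds B t \<Longrightarrow> j \<le> k \<Longrightarrow> k \<le> 2^B \<Longrightarrow> t j \<le> t k"
  using thr_mono_aux[of B t j k] by (cases "j = k") auto

lemma qidx_eq: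
  assumes th: "thresholds B t" and j: "j < 2^B" "t j \<le> ereal y" "ereal y < t (Suc j)"
  shows "qidx B t y = j"
  unfolding qidx_def
proof (rule the_equality)
  show "j < 2 ^ B \<and> t j \<le> ereal y \<and> ereal y < t (Suc j)" using j by auto
  fix k assume k: "k < 2 ^ B \<and> t k \<le> ereal y \<and> ereal y < t (Suc k)"
  show "k = j"
  proof (rule ccontr)
    assume "k \<noteq> j"
    then consider "k < j" | "j < k" by linarith
    then show False
    proof cases
      case 1
      then have "t (Suc k) \<le> t j" using thr_mono[OF th, of "Suc k" j] j by auto
      then show False using k j by auto
    next
      case 2
      then have "t (Suc j) \<le> t k" using thr_mono[OF th, of "Suc j" k] k by auto
      then show False using k j by auto
    qed
  qed
qed

lemma qidx_spec:
  assumes th: "thresholds B t"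
  shows "qidx B t y < 2^B \<and> t (qidx B t y) \<le> ereal y \<and> ereal y < t (Suc (qidx B t y))"
proof -
  define S where "S = {j. j < 2^B \<and> t j \<le> ereal y}"
  have "0 \<in> S" using th by (auto simp: S_def thresholds_def)
  have fin: "finite S" by (auto simp: S_def)
  define j where "j = Max S"
  have jS: "j \<in> S" using fin \<open>0 \<in> S\<close> by (auto simp: j_def intro: Max_in)
  have up: "ereal y < t (Suc j)"
  proof (cases "Suc j = 2^B")
    case True then show ?thesis using th by (auto simp: thresholds_def)
  next
    case False
    then have "Suc j < 2^B" using jS by (auto simp: S_def)
    moreover have "Suc j \<notin> S" using Max_ge[OF fin, of "Suc j"] by (auto simp: j_def)
    ultimately show ?thesis by (auto simp: S_def)
  qed
  have "qidx B t y = j" using qidx_eq[OF th, of j y] jS up by (auto simp: S_def)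
  then show ?thesis using jS up by (auto simp: S_def)
qed

lemma Pq_pos: assumes th: "thresholds B t" and j: "j < 2^B" shows "0 < Pq t j z"
proof -
  have lt: "t j < t (Suc j)" using th j by (auto simp: thresholds_def)
  have fin: "0 < i \<Longrightarrow> i < 2^B \<Longrightarrow> \<bar>t i\<bar> \<noteq> \<infinity>" for i using th by (auto simp: thresholds_def)
  show ?thesis
  proof (cases "t j")
    case (real a)
    show ?thesis
    proof (cases "t (Suc j)")
      case (real b)
      then show ?thesis using \<open>t j = ereal a\<close> lt Phi_strict_mono[of "(a - z)/cc" "(b - z)/cc"]
        by (auto simp: Pq_def PhiE_formula divide_strict_right_mono)
    next
      case PInf then show ?thesis using \<open>t j = ereal a\<close> Phi_less1 by (auto simp: Pq_def PhiE_formula)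
    next
      case MInf then show ?thesis using lt by simp
    qed
  next
    case PInf then show ?thesis using lt by simp
  next
    case MInf
    show ?thesis
    proof (cases "t (Suc j)")
      case (real b)
      then show ?thesis using \<open>t j = -\<infinity>\<close> Phi_pos by (auto simp: Pq_def PhiE_formula)
    next
      case PInf then show ?thesis using \<open>t j = -\<infinity>\<close> by (auto simp: Pq_def PhiE_formula)
    next
      case MInf then show ?thesis using lt by simp
    qed
  qed
qed

lemma Pq_sum: assumes th: "thresholds B t" shows "(\<Sum>j<2^B. Pq t j z) = 1"
proof -
  have "(\<Sum>j<2^B. Pq t j z) = Phi_ext ((t (2^B) - ereal z) / ereal cc) - Phi_ext ((t 0 - ereal z) / ereal cc)"
    unfolding Pq_def by (rule sum_lessThan_telescope)
  also have "\<dots> = 1" using th by (simp add: thresholds_def PhiE_formula)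
  finally show ?thesis .
qed

lemma Phi_borel[measurable]: "Phi \<in> borel_measurable borel"
  by (rule borel_measurable_continuous_onI) (auto intro: DERIV_isCont[OF DERIV_Phi] continuous_at_imp_continuous_on)

lemma PhiE_borel[measurable]: "(\<lambda>z. Phi_ext ((e - ereal z) / ereal cc)) \<in> borel_measurable borel"
proof (cases e)
  case (real a)
  have "(\<lambda>z. Phi ((a - z) / cc)) \<in> borel_measurable borel" by measurable
  then show ?thesis using real by (simp add: PhiE_formula)
qed (simp_all add: PhiE_formula)

lemma Pq_borel[measurable]: "Pq t j \<in> borel_measurable borel"
  unfolding Pq_def by measurable

lemma Iq_borel[measurable]: "Iq t j \<in> sets borel"
  unfolding Iq_def by measurable

lemma qidx_sum:
  fixes f :: "nat \<Rightarrow> real"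
  assumes th: "thresholds B t"
  shows "f (qidx B t y) = (\<Sum>j<2^B. indicator (Iq t j) y * f j)"
proof -
  have "indicator (Iq t j) y * f j = (if j = qidx B t y then f j else 0)" if "j < 2^B" for j
  proof (cases "j = qidx B t y")
    case True
    then show ?thesis using qidx_spec[OF th, of y] by (simp add: Iq_def indicator_def)
  next
    case False
    have "y \<notin> Iq t j"
    proof
      assume "y \<in> Iq t j"
      then have "qidx B t y = j" using qidx_eq[OF th that, of y] by (simp add: Iq_def)
      then show False using False by simp
    qed
    then show ?thesis using False by simp
  qed
  then have "(\<Sum>j<2^B. indicator (Iq t j) y * f j) = (\<Sum>j<2^B. if j = qidx B t y then f j else 0)"
    by (intro sum.cong) (simp_all only: lessThan_iff)
  also have "\<dots> = f (qidx B t y)" using qidx_spec[OF th, of y] by simp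
  finally show ?thesis by simp
qed

definition zf :: "complex ^ 'n \<Rightarrow> complex ^ 'n \<Rightarrow> complex" where
  "zf a x = (\<Sum>j\<in>UNIV. a $ j * x $ j)"

definition TmQ :: "nat \<Rightarrow> (nat \<Rightarrow> ereal) \<Rightarrow> real \<Rightarrow> real \<Rightarrow> real" where
  "TmQ B t y z = ln (Pq t (qidx B t y) z)"

lemma sum_UNIV_Plus: "(\<Sum>k\<in>(UNIV :: ('a::finite + 'b::finite) set). f k) = (\<Sum>j\<in>UNIV. f (Inl j)) + (\<Sum>j\<in>UNIV. f (Inr j))"
  by (subst UNIV_Plus_UNIV[symmetric], subst sum.Plus) (auto simp: comp_def)

lemma rowR_vecR_Inl: "rowR A (Inl i) \<bullet> vecR x = Re (zf (A i) x)"
  by (simp add: inner_vec_def sum_UNIV_Plus rowR_def vecR_def zf_def Re_sum sum_subtractf sum_negf)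

lemma rowR_vecR_Inr: "rowR A (Inr i) \<bullet> vecR x = Im (zf (A i) x)"
  by (simp add: inner_vec_def sum_UNIV_Plus rowR_def vecR_def zf_def Im_sum sum.distrib[symmetric] algebra_simps)

lemma ell_split:
  assumes "finite CV"
  shows "ell_CV B t CV A v h hh =
    (\<Sum>i\<in>CV. TmQ B t (Re (zf (A i) h) + Re (v i)) (Re (zf (A i) hh))
            + TmQ B t (Im (zf (A i) h) + Im (v i)) (Im (zf (A i) hh)))"
proof -
  have d: "Inl ` CV \<inter> Inr ` CV = {}" by auto
  show ?thesis
    unfolding ell_CV_def Let_def
    using assms
    by (simp add: sum.union_disjoint[OF _ _ d] sum.reindex sum.distrib rowR_vecR_Inl rowR_vecR_Inr
        seqR_def TmQ_def Pq_def q_up_def q_lo_def)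
qed

lemma ereal_minus_div: "0 < c \<Longrightarrow> (e - ereal z) / ereal c = e / ereal c - ereal (z / c)"
  by (cases e) (auto simp: diff_divide_distrib)

lemma ereal_div_strict: "0 < c \<Longrightarrow> e1 < e2 \<Longrightarrow> e1 / ereal c < e2 / ereal c"
  by (cases e1; cases e2) (auto simp: divide_strict_right_mono)

lemma concave_scale:
  assumes "concave_on UNIV g" "0 < c"
  shows "concave_on UNIV (\<lambda>z::real. g (z / c))"
  unfolding concave_on_iff
proof (intro conjI ballI allI impI)
  fix x y u v :: real assume uv: "0 \<le> u" "0 \<le> v" "u + v = 1"
  have "u * g (x / c) + v * g (y / c) \<le> g (u *\<^sub>R (x / c) + v *\<^sub>R (y / c))"
    using assms(1) uv unfolding concave_on_iff by blast
  also have "u *\<^sub>R (x / c) + v *\<^sub>R (y / c) = (u *\<^sub>R x + v *\<^sub>R y) / c"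
    by (simp add: add_divide_distrib)
  finally show "u * g (x / c) + v * g (y / c) \<le> g ((u *\<^sub>R x + v *\<^sub>R y) / c)" .
qed simp

lemma TmQ_concave:
  assumes th: "thresholds B t"
  shows "concave_on UNIV (TmQ B t y)"
proof -
  let ?j = "qidx B t y"
  have lt: "t ?j < t (Suc ?j)" using qidx_spec[OF th, of y] th by (auto simp: thresholds_def)
  have lt': "t ?j / ereal cc < t (Suc ?j) / ereal cc" by (rule ereal_div_strict[OF cc_pos lt])
  have "concave_on UNIV (\<lambda>z. (\<lambda>w. ln (Phi_ext (t (Suc ?j) / ereal cc - ereal w) - Phi_ext (t ?j / ereal cc - ereal w))) (z / cc))"
    by (rule concave_scale[OF LC[OF lt'] cc_pos])
  moreover have "TmQ B t y = (\<lambda>z. (\<lambda>w. ln (Phi_ext (t (Suc ?j) / ereal cc - ereal w) - Phi_ext (t ?j / ereal cc - ereal w))) (z / cc))"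
    by (rule ext) (simp add: TmQ_def Pq_def ereal_minus_div[OF cc_pos])
  ultimately show ?thesis by simp
qed

lemma zf_lin: "zf a (u *\<^sub>R x + w *\<^sub>R y) = of_real u * zf a x + of_real w * zf a y"
proof -
  have "(u *\<^sub>R x + w *\<^sub>R y) $ j = of_real u * x $ j + of_real w * y $ j" for j
    by (simp only: vector_add_component vector_scaleR_component) (simp add: scaleR_conv_of_real)
  then show ?thesis
    by (simp add: zf_def sum.distrib sum_distrib_left algebra_simps)
qed

lemma ell_concave_pt:
  assumes fin: "finite CV" and th: "thresholds B t" and s: "0 \<le> s" "s \<le> 1"
  shows "(1 - s) * ell_CV B t CV A v h x + s * ell_CV B t CV A v h x'
         \<le> ell_CV B t CV A v h ((1 - s) *\<^sub>R x + s *\<^sub>R x')"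
proof -
  have c: "(1 - s) * TmQ B t y z1 + s * TmQ B t y z2 \<le> TmQ B t y ((1 - s) * z1 + s * z2)" for y z1 z2
    using concave_onD[OF TmQ_concave[OF th, of y] s, of z1 z2] by simp
  show ?thesis
    unfolding ell_split[OF fin] sum_distrib_left sum.distrib[symmetric]
  proof (intro sum_mono)
    fix i assume "i \<in> CV"
    let ?y1 = "Re (zf (A i) h) + Re (v i)" and ?y2 = "Im (zf (A i) h) + Im (v i)"
    have 1: "(1 - s) * TmQ B t ?y1 (Re (zf (A i) x)) + s * TmQ B t ?y1 (Re (zf (A i) x'))
        \<le> TmQ B t ?y1 (Re (zf (A i) ((1 - s) *\<^sub>R x + s *\<^sub>R x')))"
      using c[of ?y1 "Re (zf (A i) x)" "Re (zf (A i) x')"] by (simp add: zf_lin)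
    have 2: "(1 - s) * TmQ B t ?y2 (Im (zf (A i) x)) + s * TmQ B t ?y2 (Im (zf (A i) x'))
        \<le> TmQ B t ?y2 (Im (zf (A i) ((1 - s) *\<^sub>R x + s *\<^sub>R x')))"
      using c[of ?y2 "Im (zf (A i) x)" "Im (zf (A i) x')"] by (simp add: zf_lin)
    show "(1 - s) * (TmQ B t ?y1 (Re (zf (A i) x)) + TmQ B t ?y2 (Im (zf (A i) x))) +
          s * (TmQ B t ?y1 (Re (zf (A i) x')) + TmQ B t ?y2 (Im (zf (A i) x')))
        \<le> TmQ B t ?y1 (Re (zf (A i) ((1 - s) *\<^sub>R x + s *\<^sub>R x'))) +
           TmQ B t ?y2 (Im (zf (A i) ((1 - s) *\<^sub>R x + s *\<^sub>R x')))"
      using 1 2 by (simp add: algebra_simps)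
  qed
qed

lemma TmQ_sum:
  assumes th: "thresholds B t"
  shows "TmQ B t y z = (\<Sum>j<2^B. indicator (Iq t j) y * ln (Pq t j z))"
  unfolding TmQ_def by (rule qidx_sum[OF th])

lemma TmQ_meas[measurable (raw)]:
  assumes th: "thresholds B t" and f: "f \<in> borel_measurable M" and g: "g \<in> borel_measurable M"
  shows "(\<lambda>x. TmQ B t (f x) (g x)) \<in> borel_measurable M"
proof -
  have "(\<lambda>x. \<Sum>j<2^B. indicator (Iq t j) (f x) * ln (Pq t j (g x))) \<in> borel_measurable M"
    using f g by measurable
  then show ?thesis by (simp add: TmQ_sum[OF th])
qed

lemma zf_meas[measurable (raw)]:
  assumes "\<And>j. (\<lambda>\<omega>. a \<omega> $ j) \<in> borel_measurable M"
  shows "(\<lambda>\<omega>. zf (a \<omega>) x) \<in> borel_measurable M"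
  unfolding zf_def using assms by measurable

lemma ell_meas:
  assumes th: "thresholds B t" and fin: "finite CV"
    and mA: "\<forall>i j. (\<lambda>\<omega>. A \<omega> i $ j) \<in> borel_measurable M"
    and mv: "\<forall>i. (\<lambda>\<omega>. v \<omega> i) \<in> borel_measurable M"
  shows "(\<lambda>\<omega>. ell_CV B t CV (A \<omega>) (v \<omega>) h hh) \<in> borel_measurable M"
proof -
  have [measurable]: "(\<lambda>\<omega>. A \<omega> i $ j) \<in> borel_measurable M" for i j using mA by auto
  have [measurable]: "(\<lambda>\<omega>. v \<omega> i) \<in> borel_measurable M" for i using mv by auto
  have "(\<lambda>\<omega>. \<Sum>i\<in>CV. TmQ B t (Re (zf (A \<omega> i) h) + Re (v \<omega> i)) (Re (zf (A \<omega> i) hh))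
            + TmQ B t (Im (zf (A \<omega> i) h) + Im (v \<omega> i)) (Im (zf (A \<omega> i) hh))) \<in> borel_measurable M"
    using th by measurable
  then show ?thesis by (simp add: ell_split[OF fin])
qed

lemma (in prob_space) exists_good:
  assumes "U \<in> sets M" "measure M U < 1"
  shows "\<exists>\<omega>\<in>space M. \<omega> \<notin> U"
proof (rule ccontr)
  assume "\<not> ?thesis"
  then have "space M \<subseteq> U" by auto
  then have "measure M (space M) \<le> measure M U" using assms by (intro finite_measure_mono) auto
  then show False using assms prob_space by simp
qed

lemma limit_concave:
  fixes X :: "nat \<Rightarrow> 'a \<Rightarrow> 'b::real_vector \<Rightarrow> real"
  assumes ps: "prob_space M"
    and meas: "\<And>k hh. (\<lambda>\<omega>. X k \<omega> hh) \<in> borel_measurable M"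
    and conc: "\<And>k \<omega> x y s. 0 \<le> s \<Longrightarrow> s \<le> 1 \<Longrightarrow> (1-s) * X k \<omega> x + s * X k \<omega> y \<le> X k \<omega> ((1-s) *\<^sub>R x + s *\<^sub>R y)"
    and conv: "\<And>hh. conv_in_prob M (\<lambda>k \<omega>. X k \<omega> hh) (f hh)"
  shows "concave_on UNIV f"
proof -
  interpret prob_space M by (rule ps)
  have main: "(1-s) * f x + s * f y \<le> f ((1-s) *\<^sub>R x + s *\<^sub>R y) + 2 * e"
    if s: "0 \<le> s" "s \<le> 1" and e: "0 < e" for x y s e
  proof -
    let ?m = "(1-s) *\<^sub>R x + s *\<^sub>R y"
    define bad where "bad k z = {\<omega> \<in> space M. e < \<bar>X k \<omega> z - f z\<bar>}" for k z
    have bad_sets: "bad k z \<in> sets M" for k z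
      unfolding bad_def using meas[of k z] by measurable
    have lim: "(\<lambda>k. measure M (bad k z)) \<longlonglongrightarrow> 0" for z
      using conv[of z] e unfolding conv_in_prob_def bad_def by auto
    have ev: "\<forall>\<^sub>F k in sequentially. measure M (bad k z) < 1/3" for z
      using order_tendstoD(2)[OF lim[of z], of "1/3"] by simp
    obtain k where k: "measure M (bad k x) < 1/3" "measure M (bad k y) < 1/3" "measure M (bad k ?m) < 1/3"
      using eventually_conj[OF ev[of x] eventually_conj[OF ev[of y] ev[of ?m]]] eventually_sequentially by auto
    let ?U = "bad k x \<union> bad k y \<union> bad k ?m"
    have "measure M ?U \<le> measure M (bad k x \<union> bad k y) + measure M (bad k ?m)"
      by (intro measure_subadditive) (auto intro: bad_sets)
    also have "\<dots> \<le> measure M (bad k x) + measure M (bad k y) + measure M (bad k ?m)"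
      by (intro add_mono measure_subadditive order_refl) (auto intro: bad_sets)
    finally have "measure M ?U < 1" using k by linarith
    then obtain \<omega> where \<omega>: "\<omega> \<in> space M" "\<omega> \<notin> ?U"
      using exists_good[of ?U] bad_sets by blast
    have bx: "\<bar>X k \<omega> x - f x\<bar> \<le> e" and by': "\<bar>X k \<omega> y - f y\<bar> \<le> e" and bm: "\<bar>X k \<omega> ?m - f ?m\<bar> \<le> e"
      using \<omega> by (auto simp: bad_def not_less)
    have c: "(1-s) * X k \<omega> x + s * X k \<omega> y \<le> X k \<omega> ?m" by (rule conc[OF s])
    have "(1-s) * f x \<le> (1-s) * (X k \<omega> x + e)" using bx s by (intro mult_left_mono) auto
    moreover have "s * f y \<le> s * (X k \<omega> y + e)" using by' s by (intro mult_left_mono) auto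
    ultimately have "(1-s) * f x + s * f y \<le> (1-s) * X k \<omega> x + s * X k \<omega> y + e"
      by (simp add: algebra_simps)
    then show ?thesis using c bm by linarith
  qed
  have H: "(1-s) * f x + s * f y \<le> f ((1-s) *\<^sub>R x + s *\<^sub>R y)" if s: "0 \<le> s" "s \<le> 1" for x y s
  proof (rule field_le_epsilon)
    fix e :: real assume "0 < e"
    from main[OF s, of "e/2" x y] \<open>0 < e\<close> show "(1-s) * f x + s * f y \<le> f ((1-s) *\<^sub>R x + s *\<^sub>R y) + e" by simp
  qed
  show ?thesis unfolding concave_on_iff
  proof (intro conjI ballI allI impI)
    fix x y :: 'b and u v :: real assume uv: "0 \<le> u" "0 \<le> v" "u + v = 1"
    have u: "1 - v = u" using uv by simp
    show "u * f x + v * f y \<le> f (u *\<^sub>R x + v *\<^sub>R y)" using H[of v x y] uv unfolding u by simp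
  qed simp
qed

lemma limit_le:
  fixes Xa Xb :: "nat \<Rightarrow> 'a \<Rightarrow> real"
  assumes ps: "prob_space M"
    and ma: "\<And>k. Xa k \<in> borel_measurable M" and mb: "\<And>k. Xb k \<in> borel_measurable M"
    and ca: "conv_in_prob M Xa fa" and cb: "conv_in_prob M Xb fb"
    and small: "\<And>e. 0 < e \<Longrightarrow> (\<lambda>k. measure M {\<omega> \<in> space M. e \<le> Xa k \<omega> - Xb k \<omega>}) \<longlonglongrightarrow> 0"
  shows "fa \<le> fb"
proof (rule ccontr)
  interpret prob_space M by (rule ps)
  assume "\<not> fa \<le> fb"
  define e where "e = (fa - fb) / 3"
  have e: "0 < e" using \<open>\<not> fa \<le> fb\<close> by (simp add: e_def)
  define Ba where "Ba k = {\<omega> \<in> space M. e < \<bar>Xa k \<omega> - fa\<bar>}" for k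
  define Bb where "Bb k = {\<omega> \<in> space M. e < \<bar>Xb k \<omega> - fb\<bar>}" for k
  define E where "E k = {\<omega> \<in> space M. e \<le> Xa k \<omega> - Xb k \<omega>}" for k
  have sets: "Ba k \<in> sets M" "Bb k \<in> sets M" "E k \<in> sets M" for k
    unfolding Ba_def Bb_def E_def using ma[of k] mb[of k] by measurable
  have la: "(\<lambda>k. measure M (Ba k)) \<longlonglongrightarrow> 0" using ca e by (auto simp: conv_in_prob_def Ba_def)
  have lb: "(\<lambda>k. measure M (Bb k)) \<longlonglongrightarrow> 0" using cb e by (auto simp: conv_in_prob_def Bb_def)
  have lE: "(\<lambda>k. measure M (E k)) \<longlonglongrightarrow> 0" using small[OF e] by (simp add: E_def)
  obtain k where k: "measure M (Ba k) < 1/3" "measure M (Bb k) < 1/3" "measure M (E k) < 1/3"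
    using eventually_conj[OF order_tendstoD(2)[OF la, of "1/3"] eventually_conj[OF order_tendstoD(2)[OF lb, of "1/3"] order_tendstoD(2)[OF lE, of "1/3"]]]
      eventually_sequentially by auto
  have "space M \<subseteq> Ba k \<union> Bb k \<union> E k"
  proof
    fix \<omega> assume \<omega>: "\<omega> \<in> space M"
    show "\<omega> \<in> Ba k \<union> Bb k \<union> E k"
    proof (rule ccontr)
      assume "\<omega> \<notin> Ba k \<union> Bb k \<union> E k"
      then have "\<bar>Xa k \<omega> - fa\<bar> \<le> e" "\<bar>Xb k \<omega> - fb\<bar> \<le> e" "Xa k \<omega> - Xb k \<omega> < e"
        using \<omega> by (auto simp: Ba_def Bb_def E_def not_less)
      then have "fa - e \<le> Xa k \<omega>" "Xb k \<omega> \<le> fb + e" "Xa k \<omega> - Xb k \<omega> < e" by (auto simp: abs_le_iff)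
      moreover have "3 * e = fa - fb" using e_def by simp
      ultimately show False by linarith
    qed
  qed
  then have "measure M (space M) \<le> measure M (Ba k \<union> Bb k \<union> E k)"
    using sets by (intro finite_measure_mono) auto
  also have "\<dots> \<le> measure M (Ba k \<union> Bb k) + measure M (E k)"
    by (intro measure_subadditive) (auto intro: sets)
  also have "\<dots> \<le> measure M (Ba k) + measure M (Bb k) + measure M (E k)"
    by (intro add_mono measure_subadditive order_refl) (auto intro: sets)
  finally show False using k prob_space by simp
qed

abbreviation "Nc \<equiv> density lborel (normal_density 0 cc)"

lemma nd_scale: assumes "0 < s" shows "normal_density 0 s (s * u) = phi u / s"
proof -
  have "sqrt (2 * pi * s\<^sup>2) = sqrt (2 * pi) * s" using assms by (simp add: real_sqrt_mult)
  moreover have "(s * u)\<^sup>2 / (2 * s\<^sup>2) = u\<^sup>2 / 2" using assms by (simp add: power_mult_distrib)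
  ultimately show ?thesis unfolding normal_density_def std_normal_density_def by simp
qed

lemma emeasure_Dn_single: "emeasure Dn {a} = 0"
proof -
  have AE: "AE x in lborel. x \<in> {a} \<longrightarrow> ennreal (phi x) = 0"
    using AE_lborel_singleton[of a] by eventually_elim auto
  have "{a} \<in> null_sets Dn"
    by (subst null_sets_density_iff) (use AE in auto)
  then show ?thesis by (simp add: null_setsD1)
qed

lemma emeasure_Dn_Iic: "emeasure Dn {..a} = ennreal (Phi a)"
proof -
  interpret prob_space Dn by (rule prob_space_normal_density) simp
  show ?thesis unfolding Phi_def by (rule emeasure_eq_measure)
qed

lemma emeasure_Dn_Iio: "emeasure Dn {..<a} = ennreal (Phi a)"
proof -
  have "{..a} = {..<a} \<union> {a}" by auto
  then have "emeasure Dn {..a} = emeasure Dn {..<a} + emeasure Dn {a}"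
    by (simp add: plus_emeasure)
  then show ?thesis using emeasure_Dn_single[of a] emeasure_Dn_Iic[of a] by simp
qed

lemma emeasure_Nc_Iio: "emeasure Nc {..<b} = ennreal (Phi (b / cc))"
proof -
  have "emeasure Nc {..<b} = (\<integral>\<^sup>+x. ennreal (normal_density 0 cc x) * indicator {..<b} x \<partial>lborel)"
    by (subst emeasure_density) auto
  also have "\<dots> = ennreal \<bar>cc\<bar> * (\<integral>\<^sup>+u. ennreal (normal_density 0 cc (0 + cc * u)) * indicator {..<b} (0 + cc * u) \<partial>lborel)"
    by (rule nn_integral_real_affine) auto
  also have "\<dots> = (\<integral>\<^sup>+u. ennreal cc * (ennreal (normal_density 0 cc (cc * u)) * indicator {..<b} (cc * u)) \<partial>lborel)"
    by (subst nn_integral_cmult) auto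
  also have "\<dots> = (\<integral>\<^sup>+u. ennreal (phi u) * indicator {..<b/cc} u \<partial>lborel)"
  proof (rule nn_integral_cong)
    fix u :: real
    have "cc * u < b \<longleftrightarrow> u < b / cc" using cc_pos by (simp add: pos_less_divide_eq mult.commute)
    moreover have "ennreal cc * ennreal (phi u / cc) = ennreal (phi u)"
      using cc_pos by (simp add: ennreal_mult[symmetric])
    ultimately show "ennreal cc * (ennreal (normal_density 0 cc (cc * u)) * indicator {..<b} (cc * u)) = ennreal (phi u) * indicator {..<b/cc} u"
      using nd_scale[OF cc_pos, of u] by (auto simp: indicator_def)
  qed
  also have "\<dots> = emeasure Dn {..<b/cc}"
    by (subst emeasure_density) auto
  finally show ?thesis by (simp add: emeasure_Dn_Iio)
qed

lemma prob_Nc: "prob_space Nc"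
  by (rule prob_space_normal_density) simp

lemma emeasure_Nc_L: "emeasure Nc {x. ereal (z0 + x) < e} = ennreal (Phi_ext ((e - ereal z0) / ereal cc))"
proof (cases e)
  case (real b)
  have "{x. ereal (z0 + x) < e} = {..<b - z0}" using real by auto
  then show ?thesis using real emeasure_Nc_Iio[of "b - z0"] by simp
next
  case PInf
  interpret prob_space Nc by (rule prob_Nc)
  have "{x. ereal (z0 + x) < e} = space Nc" using PInf by auto
  then show ?thesis using PInf emeasure_space_1 by simp
next
  case MInf
  then show ?thesis by simp
qed

lemma L_sets[measurable]: "{x::real. ereal (z0 + x) < e} \<in> sets borel"
  by measurable

lemma emeasure_Nc_Iq:
  assumes th: "thresholds B t" and j: "j < 2^B"
  shows "emeasure Nc {x. z0 + x \<in> Iq t j} = ennreal (Pq t j z0)"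
proof -
  interpret prob_space Nc by (rule prob_Nc)
  have lt: "t j < t (Suc j)" using th j by (auto simp: thresholds_def)
  have eq: "{x. z0 + x \<in> Iq t j} = {x. ereal (z0 + x) < t (Suc j)} - {x. ereal (z0 + x) < t j}"
    by (auto simp: Iq_def not_less)
  have sub: "{x. ereal (z0 + x) < t j} \<subseteq> {x. ereal (z0 + x) < t (Suc j)}"
    using lt by auto
  have "emeasure Nc {x. z0 + x \<in> Iq t j} = emeasure Nc {x. ereal (z0 + x) < t (Suc j)} - emeasure Nc {x. ereal (z0 + x) < t j}"
    unfolding eq by (rule emeasure_Diff) (use sub in auto)
  also have "\<dots> = ennreal (Phi_ext ((t (Suc j) - ereal z0) / ereal cc)) - ennreal (Phi_ext ((t j - ereal z0) / ereal cc))"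
    by (simp add: emeasure_Nc_L)
  also have "\<dots> = ennreal (Pq t j z0)"
  proof -
    have "0 \<le> Phi_ext ((t j - ereal z0) / ereal cc)"
      by (simp add: PhiE_formula Phi_nonneg)
    then show ?thesis by (simp add: Pq_def ennreal_minus)
  qed
  finally show ?thesis .
qed

lemma Pq_nonneg: "thresholds B t \<Longrightarrow> j < 2^B \<Longrightarrow> 0 \<le> Pq t j z"
  using Pq_pos[of B t j z] by simp

definition Rr :: "nat \<Rightarrow> (nat \<Rightarrow> ereal) \<Rightarrow> real \<Rightarrow> real \<Rightarrow> real \<Rightarrow> real" where
  "Rr B t y z z' = (\<Sum>j<2^B. indicator (Iq t j) y * (Pq t j z' / Pq t j z))"

lemma Rr_nonneg: "thresholds B t \<Longrightarrow> 0 \<le> Rr B t y z z'"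
  unfolding Rr_def
  by (intro sum_nonneg mult_nonneg_nonneg divide_nonneg_nonneg) (auto intro: Pq_nonneg)

lemma Rr_meas[measurable (raw)]:
  assumes "f \<in> borel_measurable M" "g \<in> borel_measurable M" "g' \<in> borel_measurable M"
  shows "(\<lambda>x. Rr B t (f x) (g x) (g' x)) \<in> borel_measurable M"
  unfolding Rr_def using assms by measurable

lemma Gauss_Rr:
  assumes th: "thresholds B t" and D: "distributed M lborel X (normal_density 0 cc)"
  shows "(\<integral>\<^sup>+\<omega>. ennreal (Rr B t (z0 + X \<omega>) z0 z') \<partial>M) = 1"
proof -
  have mX: "X \<in> measurable M lborel" and dd: "distr M lborel X = Nc"
    using D by (auto simp: distributed_def)
  have "(\<integral>\<^sup>+\<omega>. ennreal (Rr B t (z0 + X \<omega>) z0 z') \<partial>M) = (\<integral>\<^sup>+x. ennreal (Rr B t (z0 + x) z0 z') \<partial>distr M lborel X)"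
    by (subst nn_integral_distr[OF mX]) auto
  also have "\<dots> = (\<integral>\<^sup>+x. (\<Sum>j<2^B. ennreal (Pq t j z' / Pq t j z0) * indicator {x. z0 + x \<in> Iq t j} x) \<partial>Nc)"
  proof -
    have "ennreal (Rr B t (z0 + x) z0 z') = (\<Sum>j<2^B. ennreal (indicator (Iq t j) (z0 + x) * (Pq t j z' / Pq t j z0)))" for x
      unfolding Rr_def
      by (rule sum_ennreal[symmetric]) (auto intro!: mult_nonneg_nonneg divide_nonneg_nonneg Pq_nonneg[OF th])
    also have "\<dots> x = (\<Sum>j<2^B. ennreal (Pq t j z' / Pq t j z0) * indicator {x. z0 + x \<in> Iq t j} x)" for x
      by (intro sum.cong refl) (simp add: indicator_def)
    finally have *: "ennreal (Rr B t (z0 + x) z0 z') = (\<Sum>j<2^B. ennreal (Pq t j z' / Pq t j z0) * indicator {x. z0 + x \<in> Iq t j} x)" for x .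
    show ?thesis by (simp only: * dd)
  qed
  also have "\<dots> = (\<Sum>j<2^B. ennreal (Pq t j z' / Pq t j z0) * emeasure Nc {x. z0 + x \<in> Iq t j})"
    by (subst nn_integral_sum) (auto simp: nn_integral_cmult_indicator)
  also have "\<dots> = (\<Sum>j<2^B. ennreal (Pq t j z'))"
  proof (rule sum.cong)
    fix j :: nat assume "j \<in> {..<2^B}"
    then have j: "j < 2^B" by simp
    have p: "0 < Pq t j z0" "0 < Pq t j z'" using Pq_pos[OF th j] by auto
    show "ennreal (Pq t j z' / Pq t j z0) * emeasure Nc {x. z0 + x \<in> Iq t j} = ennreal (Pq t j z')"
      using p by (simp add: emeasure_Nc_Iq[OF th j] ennreal_mult[symmetric])
  qed simp
  also have "\<dots> = ennreal (\<Sum>j<2^B. Pq t j z')"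
    by (subst sum_ennreal) (auto intro: Pq_nonneg[OF th])
  also have "\<dots> = 1" by (simp add: Pq_sum[OF th])
  finally show ?thesis .
qed

lemma (in prob_space) indep_pair_nn:
  assumes ind: "indep_var S U T V" and F: "F \<in> borel_measurable (S \<Otimes>\<^sub>M T)"
  shows "(\<integral>\<^sup>+\<omega>. F (U \<omega>, V \<omega>) \<partial>M) = (\<integral>\<^sup>+u. (\<integral>\<^sup>+\<omega>. F (u, V \<omega>) \<partial>M) \<partial>distr M S U)"
proof -
  have rvU: "random_variable S U" and rvV: "random_variable T V"
    using ind by (auto dest: indep_var_rv1 indep_var_rv2)
  have J: "distr M S U \<Otimes>\<^sub>M distr M T V = distr M (S \<Otimes>\<^sub>M T) (\<lambda>x. (U x, V x))"
    using ind by (simp add: indep_var_distribution_eq)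
  interpret PV: prob_space "distr M T V" by (rule prob_space_distr[OF rvV])
  have F': "F \<in> borel_measurable (distr M S U \<Otimes>\<^sub>M distr M T V)"
    using F by (simp add: measurable_cong_sets[OF sets_pair_measure_cong[OF sets_distr sets_distr]])
  have "(\<integral>\<^sup>+\<omega>. F (U \<omega>, V \<omega>) \<partial>M) = (\<integral>\<^sup>+p. F p \<partial>distr M (S \<Otimes>\<^sub>M T) (\<lambda>x. (U x, V x)))"
    by (subst nn_integral_distr) (auto intro: measurable_Pair rvU rvV F)
  also have "\<dots> = (\<integral>\<^sup>+p. F p \<partial>(distr M S U \<Otimes>\<^sub>M distr M T V))"
    by (simp add: J)
  also have "\<dots> = (\<integral>\<^sup>+u. \<integral>\<^sup>+v. F (u, v) \<partial>distr M T V \<partial>distr M S U)"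
    by (rule PV.nn_integral_fst[symmetric, OF F'])
  also have "\<dots> = (\<integral>\<^sup>+u. (\<integral>\<^sup>+\<omega>. F (u, V \<omega>) \<partial>M) \<partial>distr M S U)"
  proof (rule nn_integral_cong)
    fix u assume "u \<in> space (distr M S U)"
    then have u: "u \<in> space S" by simp
    have "(\<lambda>v. F (u, v)) \<in> borel_measurable T"
      using F u by measurable
    then show "(\<integral>\<^sup>+v. F (u, v) \<partial>distr M T V) = (\<integral>\<^sup>+\<omega>. F (u, V \<omega>) \<partial>M)"
      by (subst nn_integral_distr[OF rvV]) auto
  qed
  finally show ?thesis .
qed

lemma (in prob_space) indep_pair_one:
  assumes ind: "indep_var S U T V" and F: "F \<in> borel_measurable (S \<Otimes>\<^sub>M T)"
    and one: "\<And>u. u \<in> space S \<Longrightarrow> (\<integral>\<^sup>+\<omega>. F (u, V \<omega>) \<partial>M) = 1"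
  shows "(\<integral>\<^sup>+\<omega>. F (U \<omega>, V \<omega>) \<partial>M) = 1"
proof -
  have rvU: "random_variable S U" using ind by (auto dest: indep_var_rv1)
  interpret PU: prob_space "distr M S U" by (rule prob_space_distr[OF rvU])
  have "(\<integral>\<^sup>+\<omega>. F (U \<omega>, V \<omega>) \<partial>M) = (\<integral>\<^sup>+u. 1 \<partial>distr M S U)"
    unfolding indep_pair_nn[OF ind F] by (rule nn_integral_cong) (simp add: one)
  also have "\<dots> = 1" using PU.emeasure_space_1 by simp
  finally show ?thesis .
qed

definition Wf :: "nat \<Rightarrow> (nat \<Rightarrow> ereal) \<Rightarrow> complex \<Rightarrow> complex \<Rightarrow> complex \<Rightarrow> real" where
  "Wf B t s0 s n = Rr B t (Re s0 + Re n) (Re s0) (Re s) * Rr B t (Im s0 + Im n) (Im s0) (Im s)"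

lemma Wf_meas[measurable (raw)]:
  assumes "f \<in> borel_measurable M" "g \<in> borel_measurable M" "g' \<in> borel_measurable M"
  shows "(\<lambda>x. Wf B t (f x) (g x) (g' x)) \<in> borel_measurable M"
  unfolding Wf_def using assms by measurable

lemma Wf_nonneg: "thresholds B t \<Longrightarrow> 0 \<le> Wf B t s0 s n"
  unfolding Wf_def by (intro mult_nonneg_nonneg Rr_nonneg)

lemma (in prob_space) W_noise:
  assumes th: "thresholds B t"
    and ind: "indep_var borel (\<lambda>\<omega>. Re (w \<omega>)) borel (\<lambda>\<omega>. Im (w \<omega>))"
    and dRe: "distributed M lborel (\<lambda>\<omega>. Re (w \<omega>)) (normal_density 0 (sqrt (1/2)))"
    and dIm: "distributed M lborel (\<lambda>\<omega>. Im (w \<omega>)) (normal_density 0 (sqrt (1/2)))"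
  shows "(\<integral>\<^sup>+\<omega>. ennreal (Wf B t s0 s (w \<omega>)) \<partial>M) = 1"
proof -
  define R1 where "R1 x = Rr B t (Re s0 + x) (Re s0) (Re s)" for x
  define R2 where "R2 y = Rr B t (Im s0 + y) (Im s0) (Im s)" for y
  have [measurable]: "R1 \<in> borel_measurable borel" "R2 \<in> borel_measurable borel"
    unfolding R1_def R2_def by measurable
  have n1: "0 \<le> R1 x" for x unfolding R1_def by (rule Rr_nonneg[OF th])
  have n2: "0 \<le> R2 x" for x unfolding R2_def by (rule Rr_nonneg[OF th])
  have rvRe: "random_variable borel (\<lambda>\<omega>. Re (w \<omega>))" and rvIm: "random_variable borel (\<lambda>\<omega>. Im (w \<omega>))"
    using ind by (auto dest: indep_var_rv1 indep_var_rv2)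
  have I2: "(\<integral>\<^sup>+\<omega>. ennreal (R2 (Im (w \<omega>))) \<partial>M) = 1"
    unfolding R2_def using Gauss_Rr[OF th dIm] by simp
  have I1: "(\<integral>\<^sup>+\<omega>. ennreal (R1 (Re (w \<omega>))) \<partial>M) = 1"
    unfolding R1_def using Gauss_Rr[OF th dRe] by simp
  have "(\<integral>\<^sup>+\<omega>. ennreal (Wf B t s0 s (w \<omega>)) \<partial>M) =
        (\<integral>\<^sup>+\<omega>. (\<lambda>p. ennreal (R1 (fst p) * R2 (snd p))) (Re (w \<omega>), Im (w \<omega>)) \<partial>M)"
    by (simp add: Wf_def R1_def R2_def)
  also have "\<dots> = (\<integral>\<^sup>+x. (\<integral>\<^sup>+\<omega>. ennreal (R1 x * R2 (Im (w \<omega>))) \<partial>M) \<partial>distr M borel (\<lambda>\<omega>. Re (w \<omega>)))"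
    by (subst indep_pair_nn[OF ind]) auto
  also have "\<dots> = (\<integral>\<^sup>+x. ennreal (R1 x) \<partial>distr M borel (\<lambda>\<omega>. Re (w \<omega>)))"
  proof (rule nn_integral_cong)
    fix x
    have "(\<integral>\<^sup>+\<omega>. ennreal (R1 x * R2 (Im (w \<omega>))) \<partial>M) = (\<integral>\<^sup>+\<omega>. ennreal (R1 x) * ennreal (R2 (Im (w \<omega>))) \<partial>M)"
      using n1 n2 by (simp add: ennreal_mult)
    also have "\<dots> = ennreal (R1 x) * (\<integral>\<^sup>+\<omega>. ennreal (R2 (Im (w \<omega>))) \<partial>M)"
      using rvIm by (subst nn_integral_cmult) auto
    finally show "(\<integral>\<^sup>+\<omega>. ennreal (R1 x * R2 (Im (w \<omega>))) \<partial>M) = ennreal (R1 x)" using I2 by simp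
  qed
  also have "\<dots> = (\<integral>\<^sup>+\<omega>. ennreal (R1 (Re (w \<omega>))) \<partial>M)"
    by (subst nn_integral_distr[OF rvRe]) auto
  also have "\<dots> = 1" by (rule I1)
  finally show ?thesis .
qed

lemma (in prob_space) row_one:
  fixes A :: "'a \<Rightarrow> nat \<Rightarrow> complex ^ 'n" and v :: "'a \<Rightarrow> nat \<Rightarrow> complex"
  assumes th: "thresholds B t"
    and indep: "indep_vars (\<lambda>_. borel) (\<lambda>x \<omega>. case x of Inl (i, j) \<Rightarrow> A \<omega> i $ j | Inr i \<Rightarrow> v \<omega> i) UNIV"
    and ind: "indep_var borel (\<lambda>\<omega>. Re (v \<omega> i)) borel (\<lambda>\<omega>. Im (v \<omega> i))"
    and dRe: "distributed M lborel (\<lambda>\<omega>. Re (v \<omega> i)) (normal_density 0 (sqrt (1/2)))"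
    and dIm: "distributed M lborel (\<lambda>\<omega>. Im (v \<omega> i)) (normal_density 0 (sqrt (1/2)))"
  shows "(\<integral>\<^sup>+\<omega>. ennreal (Wf B t (zf (A \<omega> i) h) (zf (A \<omega> i) hh) (v \<omega> i)) \<partial>M) = 1"
proof -
  define X where "X = (\<lambda>x \<omega>. case x of Inl (i, j) \<Rightarrow> A \<omega> i $ j | Inr i \<Rightarrow> v \<omega> i)"
  define As :: "((nat \<times> 'n) + nat) set" where "As = range (\<lambda>j. Inl (i, j))"
  define Bs :: "((nat \<times> 'n) + nat) set" where "Bs = {Inr i}"
  have "indep_var (PiM As (\<lambda>_. borel)) (\<lambda>\<omega>. restrict (\<lambda>k. X k \<omega>) As) (PiM Bs (\<lambda>_. borel)) (\<lambda>\<omega>. restrict (\<lambda>k. X k \<omega>) Bs)"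
    by (rule indep_var_restrict[OF indep[folded X_def]]) (auto simp: As_def Bs_def)
  note I = this
  define F where "F p = ennreal (Wf B t (\<Sum>j\<in>UNIV. fst p (Inl (i, j)) * h $ j) (\<Sum>j\<in>UNIV. fst p (Inl (i, j)) * hh $ j) (snd p (Inr i)))"
    for p :: "(((nat \<times> 'n) + nat) \<Rightarrow> complex) \<times> (((nat \<times> 'n) + nat) \<Rightarrow> complex)"
  have comp[measurable]: "(\<lambda>g. g (Inl (i, j))) \<in> borel_measurable (PiM As (\<lambda>_. borel))" for j
    by (rule measurable_component_singleton) (simp add: As_def)
  have comp2[measurable]: "(\<lambda>g. g (Inr i)) \<in> borel_measurable (PiM Bs (\<lambda>_. borel))"
    by (rule measurable_component_singleton) (simp add: Bs_def)
  have Fm: "F \<in> borel_measurable (PiM As (\<lambda>_. borel) \<Otimes>\<^sub>M PiM Bs (\<lambda>_. borel))"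
    unfolding F_def by measurable
  have "(\<integral>\<^sup>+\<omega>. F (restrict (\<lambda>k. X k \<omega>) As, restrict (\<lambda>k. X k \<omega>) Bs) \<partial>M) = 1"
  proof (rule indep_pair_one[OF I Fm])
    fix u
    show "(\<integral>\<^sup>+\<omega>. F (u, restrict (\<lambda>k. X k \<omega>) Bs) \<partial>M) = 1"
      unfolding F_def by (simp add: W_noise[OF th ind dRe dIm] Bs_def X_def)
  qed
  moreover have "F (restrict (\<lambda>k. X k \<omega>) As, restrict (\<lambda>k. X k \<omega>) Bs) = ennreal (Wf B t (zf (A \<omega> i) h) (zf (A \<omega> i) hh) (v \<omega> i))" for \<omega>
    by (simp add: F_def X_def As_def Bs_def zf_def)
  ultimately show ?thesis by simp
qed

lemma (in prob_space) prod_one: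
  fixes A :: "'a \<Rightarrow> nat \<Rightarrow> complex ^ 'n" and v :: "'a \<Rightarrow> nat \<Rightarrow> complex"
  assumes th: "thresholds B t" and fin: "finite CV"
    and indep: "indep_vars (\<lambda>_. borel) (\<lambda>x \<omega>. case x of Inl (i, j) \<Rightarrow> A \<omega> i $ j | Inr i \<Rightarrow> v \<omega> i) UNIV"
    and ind: "\<forall>i. indep_var borel (\<lambda>\<omega>. Re (v \<omega> i)) borel (\<lambda>\<omega>. Im (v \<omega> i))"
    and dRe: "\<forall>i. distributed M lborel (\<lambda>\<omega>. Re (v \<omega> i)) (normal_density 0 (sqrt (1/2)))"
    and dIm: "\<forall>i. distributed M lborel (\<lambda>\<omega>. Im (v \<omega> i)) (normal_density 0 (sqrt (1/2)))"
  shows "(\<integral>\<^sup>+\<omega>. (\<Prod>i\<in>CV. ennreal (Wf B t (zf (A \<omega> i) h) (zf (A \<omega> i) hh) (v \<omega> i))) \<partial>M) = 1"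
proof -
  define X where "X = (\<lambda>x \<omega>. case x of Inl (i, j) \<Rightarrow> A \<omega> i $ j | Inr i \<Rightarrow> v \<omega> i)"
  define Ks :: "nat \<Rightarrow> ((nat \<times> 'n) + nat) set" where "Ks i = range (\<lambda>j. Inl (i, j)) \<union> {Inr i}" for i
  have disj: "disjoint_family_on Ks CV"
    by (auto simp: disjoint_family_on_def Ks_def)
  have I1: "indep_vars (\<lambda>i. PiM (Ks i) (\<lambda>_. borel)) (\<lambda>i \<omega>. restrict (\<lambda>k. X k \<omega>) (Ks i)) CV"
    by (rule indep_vars_restrict[OF indep[folded X_def] _ disj]) auto
  define Y where "Y i g = ennreal (Wf B t (\<Sum>j\<in>UNIV. g (Inl (i, j)) * h $ j) (\<Sum>j\<in>UNIV. g (Inl (i, j)) * hh $ j) (g (Inr i)))"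
    for i and g :: "((nat \<times> 'n) + nat) \<Rightarrow> complex"
  have Ym: "Y i \<in> borel_measurable (PiM (Ks i) (\<lambda>_. borel))" for i
  proof -
    have [measurable]: "(\<lambda>g. g (Inl (i, j))) \<in> borel_measurable (PiM (Ks i) (\<lambda>_. borel))" for j
      by (rule measurable_component_singleton) (simp add: Ks_def)
    have [measurable]: "(\<lambda>g. g (Inr i)) \<in> borel_measurable (PiM (Ks i) (\<lambda>_. borel))"
      by (rule measurable_component_singleton) (simp add: Ks_def)
    show ?thesis unfolding Y_def by measurable
  qed
  have I2: "indep_vars (\<lambda>_. borel) (\<lambda>i \<omega>. Y i (restrict (\<lambda>k. X k \<omega>) (Ks i))) CV"
    by (rule indep_vars_compose2[OF I1 Ym])
  have eqY: "Y i (restrict (\<lambda>k. X k \<omega>) (Ks i)) = ennreal (Wf B t (zf (A \<omega> i) h) (zf (A \<omega> i) hh) (v \<omega> i))" for i \<omega>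
    by (simp add: Y_def X_def Ks_def zf_def)
  have I3: "indep_vars (\<lambda>_. borel) (\<lambda>i \<omega>. ennreal (Wf B t (zf (A \<omega> i) h) (zf (A \<omega> i) hh) (v \<omega> i))) CV"
    using I2 by (simp add: eqY)
  have "(\<integral>\<^sup>+\<omega>. (\<Prod>i\<in>CV. ennreal (Wf B t (zf (A \<omega> i) h) (zf (A \<omega> i) hh) (v \<omega> i))) \<partial>M)
      = (\<Prod>i\<in>CV. \<integral>\<^sup>+\<omega>. ennreal (Wf B t (zf (A \<omega> i) h) (zf (A \<omega> i) hh) (v \<omega> i)) \<partial>M)"
    by (rule indep_vars_nn_integral[OF fin I3]) simp
  also have "\<dots> = (\<Prod>i\<in>CV. 1)"
    by (intro prod.cong refl row_one[OF th indep]) (use ind dRe dIm in auto)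
  finally show ?thesis by simp
qed

lemma exp_TmQ:
  assumes th: "thresholds B t"
  shows "exp (TmQ B t y z' - TmQ B t y z) = Rr B t y z z'"
proof -
  let ?j = "qidx B t y"
  have j: "?j < 2^B" using qidx_spec[OF th] by blast
  have p: "0 < Pq t ?j z" "0 < Pq t ?j z'" using Pq_pos[OF th j] by auto
  have "exp (TmQ B t y z' - TmQ B t y z) = Pq t ?j z' / Pq t ?j z"
    using p by (simp add: TmQ_def exp_diff)
  also have "\<dots> = Rr B t y z z'"
    unfolding Rr_def by (rule qidx_sum[OF th, where f = "\<lambda>j. Pq t j z' / Pq t j z"])
  finally show ?thesis .
qed

lemma exp_ell_diff:
  assumes fin: "finite CV" and th: "thresholds B t"
  shows "exp (ell_CV B t CV A v h hh - ell_CV B t CV A v h h) = (\<Prod>i\<in>CV. Wf B t (zf (A i) h) (zf (A i) hh) (v i))"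
proof -
  have "ell_CV B t CV A v h hh - ell_CV B t CV A v h h =
    (\<Sum>i\<in>CV. (TmQ B t (Re (zf (A i) h) + Re (v i)) (Re (zf (A i) hh)) - TmQ B t (Re (zf (A i) h) + Re (v i)) (Re (zf (A i) h)))
        + (TmQ B t (Im (zf (A i) h) + Im (v i)) (Im (zf (A i) hh)) - TmQ B t (Im (zf (A i) h) + Im (v i)) (Im (zf (A i) h))))"
    unfolding ell_split[OF fin] sum_subtractf[symmetric] by (intro sum.cong) auto
  then show ?thesis
    by (simp add: exp_sum[OF fin] exp_add exp_TmQ[OF th] Wf_def)
qed

lemma (in prob_space) markov_bound:
  fixes A :: "'a \<Rightarrow> nat \<Rightarrow> complex ^ 'n" and v :: "'a \<Rightarrow> nat \<Rightarrow> complex"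
  assumes th: "thresholds B t" and fin: "finite CV" and n: "0 < card CV" and e: "0 < e"
    and mA: "\<forall>i j. (\<lambda>\<omega>. A \<omega> i $ j) \<in> borel_measurable M"
    and mv: "\<forall>i. (\<lambda>\<omega>. v \<omega> i) \<in> borel_measurable M"
    and indep: "indep_vars (\<lambda>_. borel) (\<lambda>x \<omega>. case x of Inl (i, j) \<Rightarrow> A \<omega> i $ j | Inr i \<Rightarrow> v \<omega> i) UNIV"
    and ind: "\<forall>i. indep_var borel (\<lambda>\<omega>. Re (v \<omega> i)) borel (\<lambda>\<omega>. Im (v \<omega> i))"
    and dRe: "\<forall>i. distributed M lborel (\<lambda>\<omega>. Re (v \<omega> i)) (normal_density 0 (sqrt (1/2)))"
    and dIm: "\<forall>i. distributed M lborel (\<lambda>\<omega>. Im (v \<omega> i)) (normal_density 0 (sqrt (1/2)))"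
  shows "measure M {\<omega> \<in> space M. e \<le> ell_CV B t CV (A \<omega>) (v \<omega>) h hh / (2 * real (card CV))
            - ell_CV B t CV (A \<omega>) (v \<omega>) h h / (2 * real (card CV))} \<le> exp (- (2 * real (card CV) * e))"
proof -
  define N where "N = 2 * real (card CV)"
  have N: "0 < N" using n by (simp add: N_def)
  define D where "D \<omega> = ell_CV B t CV (A \<omega>) (v \<omega>) h hh - ell_CV B t CV (A \<omega>) (v \<omega>) h h" for \<omega>
  have Dm[measurable]: "D \<in> borel_measurable M"
    unfolding D_def using ell_meas[OF th fin mA mv] by measurable
  define S where "S = {\<omega> \<in> space M. e \<le> ell_CV B t CV (A \<omega>) (v \<omega>) h hh / N - ell_CV B t CV (A \<omega>) (v \<omega>) h h / N}"
  have S_eq: "S = {\<omega> \<in> space M. exp (N * e) \<le> exp (D \<omega>)}"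
    using N by (auto simp: S_def D_def diff_divide_distrib[symmetric] pos_le_divide_eq mult.commute)
  have Sm: "S \<in> sets M" unfolding S_eq by measurable
  have "ennreal (exp (N * e)) * emeasure M S = (\<integral>\<^sup>+\<omega>. ennreal (exp (N * e)) * indicator S \<omega> \<partial>M)"
    using Sm by (simp add: nn_integral_cmult_indicator)
  also have "\<dots> \<le> (\<integral>\<^sup>+\<omega>. ennreal (exp (D \<omega>)) \<partial>M)"
    by (intro nn_integral_mono) (auto simp: S_eq indicator_def)
  also have "\<dots> = (\<integral>\<^sup>+\<omega>. (\<Prod>i\<in>CV. ennreal (Wf B t (zf (A \<omega> i) h) (zf (A \<omega> i) hh) (v \<omega> i))) \<partial>M)"
    by (intro nn_integral_cong) (simp add: D_def exp_ell_diff[OF fin th] prod_ennreal Wf_nonneg[OF th])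
  also have "\<dots> = 1" by (rule prod_one[OF th fin indep ind dRe dIm])
  finally have "ennreal (exp (N * e) * measure M S) \<le> 1"
    by (simp add: emeasure_eq_measure ennreal_mult)
  then have "exp (N * e) * measure M S \<le> 1" by (simp add: ennreal_le_1)
  then have "measure M S \<le> 1 / exp (N * e)" by (simp add: pos_le_divide_eq mult.commute)
  also have "\<dots> = exp (- (N * e))" by (simp add: exp_minus field_simps)
  finally show ?thesis by (simp add: S_def N_def)
qed

lemma exp_lim: assumes e: "0 < (e::real)" and L: "filterlim (\<lambda>k. card (CV k)) at_top sequentially"
  shows "(\<lambda>k. exp (- (2 * real (card (CV k)) * e))) \<longlonglongrightarrow> 0"
proof -
  have r: "filterlim (\<lambda>k. real (card (CV k))) at_top sequentially"
    by (rule filterlim_compose[OF filterlim_real_sequentially L])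
  have "((\<lambda>x::real. exp (- (2 * x * e))) \<longlongrightarrow> 0) at_top"
    using e by real_asymp
  from filterlim_compose[OF this r] show ?thesis by (simp add: o_def)
qed

theorem lemma1:
  fixes M :: "'w measure"
    and A :: "'w \<Rightarrow> nat \<Rightarrow> complex ^ 'n"
    and v :: "'w \<Rightarrow> nat \<Rightarrow> complex"
    and h :: "complex ^ 'n"
    and B :: nat and t :: "nat \<Rightarrow> ereal"
    and CV :: "nat \<Rightarrow> nat set"
    and f :: "complex ^ 'n \<Rightarrow> real"
  assumes "prob_space M"
    and "0 < B" and "thresholds B t"
    \<comment> \<open>all entries of A and v are random variables, jointly independent
        (A has independent entries, v has independent entries, v independent of A)\<close>
    and "\<forall>i j. (\<lambda>\<omega>. A \<omega> i $ j) \<in> borel_measurable M"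
    and "\<forall>i. (\<lambda>\<omega>. v \<omega> i) \<in> borel_measurable M"
    and "prob_space.indep_vars M (\<lambda>_. borel)
           (\<lambda>x \<omega>. case x of Inl (i, j) \<Rightarrow> A \<omega> i $ j | Inr i \<Rightarrow> v \<omega> i) UNIV"
    \<comment> \<open>entries of A identically distributed, zero mean, unit variance\<close>
    and "\<forall>i j i' j'. distr M borel (\<lambda>\<omega>. A \<omega> i $ j) = distr M borel (\<lambda>\<omega>. A \<omega> i' $ j')"
    and "\<forall>i j. integrable M (\<lambda>\<omega>. A \<omega> i $ j)"
    and "\<forall>i j. (\<integral>\<omega>. A \<omega> i $ j \<partial>M) = 0"
    and "\<forall>i j. (\<integral>\<omega>. (cmod (A \<omega> i $ j))\<^sup>2 \<partial>M) = 1"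
    and "\<forall>i j. integrable M (\<lambda>\<omega>. (cmod (A \<omega> i $ j))\<^sup>2)"
    \<comment> \<open>v_i ~ CN(0,1): independent real and imaginary parts, each N(0, 1/2)\<close>
    and "\<forall>i. prob_space.indep_var M borel (\<lambda>\<omega>. Re (v \<omega> i)) borel (\<lambda>\<omega>. Im (v \<omega> i))"
    and "\<forall>i. distributed M lborel (\<lambda>\<omega>. Re (v \<omega> i)) (normal_density 0 (sqrt (1/2)))"
    and "\<forall>i. distributed M lborel (\<lambda>\<omega>. Im (v \<omega> i)) (normal_density 0 (sqrt (1/2)))"
    \<comment> \<open>a sequence of finite index sets CV with |CV| \<rightarrow> \<infinity>\<close>
    and "\<forall>k. finite (CV k)"
    and "filterlim (\<lambda>k. card (CV k)) at_top sequentially"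
    \<comment> \<open>f is the limit in probability of (1/(2|CV|)) ell_CV(hh)\<close>
    and "\<forall>hh. conv_in_prob M
           (\<lambda>k \<omega>. ell_CV B t (CV k) (A \<omega>) (v \<omega>) h hh / (2 * real (card (CV k)))) (f hh)"
  shows "concave_on UNIV f \<and> (\<forall>hh. f hh \<le> f h)"
proof -
  note ps = assms(1) and th = assms(3) and mA = assms(4) and mv = assms(5) and indep = assms(6)
    and ind = assms(12) and dRe = assms(13) and dIm = assms(14) and fin = assms(15) and L = assms(16)
    and conv = assms(17)
  interpret prob_space M by (rule ps)
  define X where "X k \<omega> hh = ell_CV B t (CV k) (A \<omega>) (v \<omega>) h hh / (2 * real (card (CV k)))" for k \<omega> hh
  have meas: "(\<lambda>\<omega>. X k \<omega> hh) \<in> borel_measurable M" for k hh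
    unfolding X_def using ell_meas[OF th fin[rule_format] mA mv] by measurable
  have conc: "(1-s) * X k \<omega> x + s * X k \<omega> y \<le> X k \<omega> ((1-s) *\<^sub>R x + s *\<^sub>R y)"
    if s: "0 \<le> s" "s \<le> 1" for k \<omega> x y s
  proof -
    have "((1 - s) * ell_CV B t (CV k) (A \<omega>) (v \<omega>) h x + s * ell_CV B t (CV k) (A \<omega>) (v \<omega>) h y) / (2 * real (card (CV k)))
        \<le> ell_CV B t (CV k) (A \<omega>) (v \<omega>) h ((1 - s) *\<^sub>R x + s *\<^sub>R y) / (2 * real (card (CV k)))"
      by (intro divide_right_mono ell_concave_pt[OF fin[rule_format] th s]) simp
    then show ?thesis unfolding X_def by (simp add: add_divide_distrib)
  qed
  have convX: "conv_in_prob M (\<lambda>k \<omega>. X k \<omega> hh) (f hh)" for hh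
    unfolding X_def using conv by simp
  have C: "concave_on UNIV f"
    by (rule limit_concave[OF ps meas conc convX])
  have Mx: "f hh \<le> f h" for hh
  proof (rule limit_le[OF ps _ _ convX convX])
    show "(\<lambda>\<omega>. X k \<omega> hh) \<in> borel_measurable M" for k by (rule meas)
    show "(\<lambda>\<omega>. X k \<omega> h) \<in> borel_measurable M" for k by (rule meas)
    fix e :: real assume e: "0 < e"
    have ev: "\<forall>\<^sub>F k in sequentially. 0 < card (CV k)"
    proof -
      have "\<forall>\<^sub>F k in sequentially. 1 \<le> card (CV k)" using L by (simp add: filterlim_at_top)
      then show ?thesis by (rule eventually_mono) simp
    qed
    show "(\<lambda>k. measure M {\<omega> \<in> space M. e \<le> X k \<omega> hh - X k \<omega> h}) \<longlonglongrightarrow> 0"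
    proof (rule tendsto_sandwich[OF _ _ tendsto_const exp_lim[OF e L]])
      show "\<forall>\<^sub>F k in sequentially. 0 \<le> measure M {\<omega> \<in> space M. e \<le> X k \<omega> hh - X k \<omega> h}" by simp
      show "\<forall>\<^sub>F k in sequentially. measure M {\<omega> \<in> space M. e \<le> X k \<omega> hh - X k \<omega> h} \<le> exp (- (2 * real (card (CV k)) * e))"
        using ev
      proof eventually_elim
        case (elim k)
        show ?case unfolding X_def
          by (rule markov_bound[OF th fin[rule_format] elim e mA mv indep ind dRe dIm])
      qed
    qed
  qed
  show ?thesis using C Mx by blast
qed

end
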